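(* Let $\Omega$ be a norm on $\mathbb{R}^p$, fix $J\subset\{1,\dots,p\}$, and let $g$ be the gauge function described in the context. Then: (1) $g$ is a norm on $\mathbb{R}^p$. (2) For every allowed set $S$ and every $\beta\in\mathbb{R}^p$: $g(\beta)\le\Upsilon_S(\beta)\le\Omega(\beta)$ and $g(\beta)\le\Upsilon_S(\beta_{f(J)})$. (3) $g$ is the dual norm of the norm $\beta\mapsto\max_{S\text{ allowed}}\max\big(\Upsilon_S^{*}(\beta),\Upsilon_S^{*}(\beta_{f(J)})\big)$; moreover, for every allowed $S$ and every $z\in\mathbb{R}^p$, $\Upsilon_S^{*}(z)=\max\big(\Omega^{*}(z_S),(\Omega^{S^{c}})^{*}(z_{S^{c}})\big)$. (4) $g(\beta_{J^{c}})\le g(\beta)$ for all $\beta\in\mathbb{R}^p$.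
   Context: For $\beta\in\mathbb{R}^p$ and $J\subset\{1,\dots,p\}$, $\beta_J$ is the vector with entries $\beta_j1\{j\in J\}$ (or its restriction to $J$, depending on context). A set $S\subset\{1,\dots,p\}$ is allowed (for $\Omega$) if there is a norm $\Omega^{S^{c}}$ on $\mathbb{R}^{|S^{c}|}$ with $\Omega(\beta_S)+\Omega^{S^{c}}(\beta_{S^{c}})\le\Omega(\beta)$ for all $\beta$; for each allowed $S$ such a norm is fixed and $\Upsilon_S(\beta):=\Omega(\beta_S)+\Omega^{S^{c}}(\beta_{S^{c}})$. For a norm $N$, $N^{*}(z):=\sup_{N(\beta)\le1}\beta^{T}z$ is its dual norm. Let $\beta_{f(J)}:=\beta_J-\beta_{J^{c}}$ and $\mathrm{flip}_J(B):=\{\beta_{f(J)}:\beta\in B\}$ for $B\subset\mathbb{R}^p$. Let $\overline{B}:=\bigcup_{S\text{ allowed}}\{\beta:\Upsilon_S(\beta)\le1\}$, $B_g:=\mathrm{Conv}(\overline{B}\cup\mathrm{flip}_J(\overline{B}))$, and $g(x):=\inf\{t>0:x\in tB_g\}$. *)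

theory Defs
  imports "HOL-Analysis.Analysis"
begin

text \<open>Vectors in R^p are modelled as real^'n with 'n a finite index type (p = CARD('n)).\<close>

definition restr :: "'n set \<Rightarrow> real^'n \<Rightarrow> real^'n" where
  "restr J \<beta> = (\<chi> i. if i \<in> J then \<beta> $ i else 0)"

definition flipv :: "'n set \<Rightarrow> real^'n \<Rightarrow> real^'n" where
  "flipv J \<beta> = restr J \<beta> - restr (- J) \<beta>"

definition flipset :: "'n set \<Rightarrow> (real^'n) set \<Rightarrow> (real^'n) set" where
  "flipset J B = flipv J ` B"

definition is_norm :: "(real^'n \<Rightarrow> real) \<Rightarrow> bool" where
  "is_norm N \<longleftrightarrow> (\<forall>x. 0 \<le> N x) \<and> (\<forall>x. N x = 0 \<longleftrightarrow> x = 0)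
     \<and> (\<forall>c x. N (c *s x) = \<bar>c\<bar> * N x) \<and> (\<forall>x y. N (x + y) \<le> N x + N y)"

text \<open>A norm on R^{|A|}, represented as a function on R^p that only depends on the
  coordinates in A (i.e. N x = N (x_A)) and is a norm on those coordinates.\<close>
definition norm_on :: "'n set \<Rightarrow> (real^'n \<Rightarrow> real) \<Rightarrow> bool" where
  "norm_on A N \<longleftrightarrow> (\<forall>x. N x = N (restr A x)) \<and> (\<forall>x. 0 \<le> N x)
     \<and> (\<forall>x. N x = 0 \<longleftrightarrow> restr A x = 0)
     \<and> (\<forall>c x. N (c *s x) = \<bar>c\<bar> * N x) \<and> (\<forall>x y. N (x + y) \<le> N x + N y)"

definition dual_norm :: "(real^'n \<Rightarrow> real) \<Rightarrow> real^'n \<Rightarrow> real" where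
  "dual_norm N z = Sup {\<beta> \<bullet> z | \<beta>. N \<beta> \<le> 1}"

definition allowed :: "(real^'n \<Rightarrow> real) \<Rightarrow> 'n set \<Rightarrow> bool" where
  "allowed \<Omega> S \<longleftrightarrow> (\<exists>N. norm_on (- S) N \<and>
      (\<forall>\<beta>. \<Omega> (restr S \<beta>) + N (restr (- S) \<beta>) \<le> \<Omega> \<beta>))"

text \<open>Upsilon_S, for the fixed choice Omc S of the norm Omega^{S^c}.\<close>
definition Upsilon :: "(real^'n \<Rightarrow> real) \<Rightarrow> ('n set \<Rightarrow> real^'n \<Rightarrow> real) \<Rightarrow> 'n set \<Rightarrow> real^'n \<Rightarrow> real" where
  "Upsilon \<Omega> Omc S \<beta> = \<Omega> (restr S \<beta>) + Omc S (restr (- S) \<beta>)"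

definition Bbar :: "(real^'n \<Rightarrow> real) \<Rightarrow> ('n set \<Rightarrow> real^'n \<Rightarrow> real) \<Rightarrow> (real^'n) set" where
  "Bbar \<Omega> Omc = (\<Union>S\<in>{S. allowed \<Omega> S}. {\<beta>. Upsilon \<Omega> Omc S \<beta> \<le> 1})"

definition Bg :: "(real^'n \<Rightarrow> real) \<Rightarrow> ('n set \<Rightarrow> real^'n \<Rightarrow> real) \<Rightarrow> 'n set \<Rightarrow> (real^'n) set" where
  "Bg \<Omega> Omc J = convex hull (Bbar \<Omega> Omc \<union> flipset J (Bbar \<Omega> Omc))"

definition gauge_g :: "(real^'n \<Rightarrow> real) \<Rightarrow> ('n set \<Rightarrow> real^'n \<Rightarrow> real) \<Rightarrow> 'n set \<Rightarrow> real^'n \<Rightarrow> real" where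
  "gauge_g \<Omega> Omc J x = Inf {t. t > 0 \<and> x \<in> (\<lambda>y. t *s y) ` Bg \<Omega> Omc J}"

definition Mnorm :: "(real^'n \<Rightarrow> real) \<Rightarrow> ('n set \<Rightarrow> real^'n \<Rightarrow> real) \<Rightarrow> 'n set \<Rightarrow> real^'n \<Rightarrow> real" where
  "Mnorm \<Omega> Omc J \<beta> = Max {max (dual_norm (Upsilon \<Omega> Omc S) \<beta>)
                                (dual_norm (Upsilon \<Omega> Omc S) (flipv J \<beta>)) | S. allowed \<Omega> S}"

end

theory Submission
  imports Defs
begin


lemma restr_add: "restr S (x + y) = restr S x + restr S y"
  by (simp add: restr_def vec_eq_iff)
lemma restr_scale: "restr S (c *\<^sub>R x) = c *\<^sub>R restr S x"
  by (simp add: restr_def vec_eq_iff)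
lemma restr_idem: "restr S (restr S x) = restr S x"
  by (simp add: restr_def vec_eq_iff)
lemma restr_compl0: "restr (- S) (restr S x) = 0" "restr S (restr (- S) x) = 0"
  by (auto simp: restr_def vec_eq_iff)
lemma restr_zero[simp]: "restr S 0 = 0"
  by (simp add: restr_def vec_eq_iff)
lemma restr_split: "restr S x + restr (- S) x = x"
  by (simp add: restr_def vec_eq_iff)
lemma restr_UNIV: "restr UNIV x = x"
  by (simp add: restr_def vec_eq_iff)
lemma restr_empty: "restr {} x = 0"
  by (simp add: restr_def vec_eq_iff)
lemma inner_restr: "restr S x \<bullet> y = x \<bullet> restr S y"
  unfolding restr_def inner_vec_def by (rule sum.cong) auto
lemma flip_flip: "flipv J (flipv J x) = x"
  by (simp add: flipv_def restr_def vec_eq_iff)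
lemma flip_add: "flipv J (x + y) = flipv J x + flipv J y"
  by (simp add: flipv_def restr_def vec_eq_iff)
lemma flip_scale: "flipv J (c *\<^sub>R x) = c *\<^sub>R flipv J x"
  by (simp add: flipv_def restr_def vec_eq_iff)
lemma flip_zero[simp]: "flipv J 0 = 0"
  by (simp add: flipv_def restr_def vec_eq_iff)
lemma inner_flip: "flipv J x \<bullet> y = x \<bullet> flipv J y"
  unfolding flipv_def restr_def inner_vec_def by (rule sum.cong) auto
lemma restr_compl_flip: "restr (- J) y = (1/2) *\<^sub>R (y + (- flipv J y))"
  by (simp add: flipv_def restr_def vec_eq_iff)
lemma flip_restr_compl: "flipv J (restr (- J) y) = (-1) *\<^sub>R restr (- J) y"
  by (simp add: flipv_def restr_def vec_eq_iff)
lemma linear_flip: "linear (flipv J)"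
  by (simp add: linearI flip_add flip_scale)



lemma isn_nonneg: "is_norm N \<Longrightarrow> 0 \<le> N x" by (simp add: is_norm_def)
lemma isn_zero: "is_norm N \<Longrightarrow> N x = 0 \<longleftrightarrow> x = 0" by (simp add: is_norm_def)
lemma isn_scale: "is_norm N \<Longrightarrow> N (c *\<^sub>R x) = \<bar>c\<bar> * N x"
  by (simp add: is_norm_def scalar_mult_eq_scaleR)
lemma isn_add: "is_norm N \<Longrightarrow> N (x + y) \<le> N x + N y" by (simp add: is_norm_def)
lemma isn_0: "is_norm N \<Longrightarrow> N 0 = 0" by (simp add: is_norm_def)

lemma isnI:
  assumes "\<And>x. 0 \<le> N x" "\<And>x. N x = 0 \<longleftrightarrow> x = 0" "\<And>c x. N (c *\<^sub>R x) = \<bar>c\<bar> * N x"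
    "\<And>x y. N (x + y) \<le> N x + N y"
  shows "is_norm N"
  using assms by (simp add: is_norm_def scalar_mult_eq_scaleR)

lemma isn_convex: assumes "is_norm N" shows "convex_on UNIV N"
proof (rule convex_onI)
  fix t :: real and x y :: "real^'a" assume t: "0 < t" "t < 1"
  have "N ((1 - t) *\<^sub>R x + t *\<^sub>R y) \<le> N ((1 - t) *\<^sub>R x) + N (t *\<^sub>R y)"
    using isn_add[OF assms] .
  also have "\<dots> = (1 - t) * N x + t * N y" using t by (simp add: isn_scale[OF assms])
  finally show "N ((1 - t) *\<^sub>R x + t *\<^sub>R y) \<le> (1 - t) * N x + t * N y" .
qed simp

lemma isn_cont: "is_norm N \<Longrightarrow> continuous_on UNIV N"
  by (rule convex_on_continuous) (auto intro: isn_convex)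

lemma isn_lower:
  assumes N: "is_norm N"
  shows "\<exists>c>0. \<forall>x. c * norm x \<le> N x"
proof -
  have "sphere (0::real^'a) 1 \<noteq> {}" by simp
  then obtain x0 where x0: "x0 \<in> sphere 0 1" "\<forall>y\<in>sphere 0 1. N x0 \<le> N y"
    using continuous_attains_inf[of "sphere 0 1" N] isn_cont[OF N]
    by (meson compact_sphere continuous_on_subset top_greatest)
  have "x0 \<noteq> 0" using x0 by auto
  hence c: "N x0 > 0" using isn_zero[OF N] isn_nonneg[OF N] by (metis less_eq_real_def)
  show ?thesis
  proof (intro exI conjI allI)
    fix x :: "real^'a"
    show "N x0 * norm x \<le> N x"
    proof (cases "x = 0")
      case True thus ?thesis by (simp add: isn_0[OF N])
    next
      case False
      hence "(1/norm x) *\<^sub>R x \<in> sphere 0 1" by simp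
      hence "N x0 \<le> N ((1/norm x) *\<^sub>R x)" using x0 by blast
      also have "\<dots> = N x / norm x" by (simp add: isn_scale[OF N])
      finally show ?thesis using False by (simp add: field_simps)
    qed
  qed (rule c)
qed

lemma isn_closed_ball: "is_norm N \<Longrightarrow> closed {x. N x \<le> r}"
  using isn_cont[of N] by (simp add: closed_Collect_le continuous_on_const)

lemma isn_compact_ball: assumes N: "is_norm N" shows "compact {x. N x \<le> r}"
proof -
  obtain c where c: "c > 0" "\<forall>x. c * norm x \<le> N x" using isn_lower[OF N] by blast
  have "bounded {x. N x \<le> r}"
    unfolding bounded_iff
  proof (intro exI ballI)
    fix x assume "x \<in> {x. N x \<le> r}"
    hence "c * norm x \<le> r" using c by (meson mem_Collect_eq order_trans)
    thus "norm x \<le> r / c" using c by (simp add: field_simps)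
  qed
  thus ?thesis using isn_closed_ball[OF N] by (simp add: compact_eq_bounded_closed)
qed



lemma dual_upper: "bdd_above {\<beta> \<bullet> z | \<beta>. N \<beta> \<le> 1} \<Longrightarrow> N \<beta> \<le> 1 \<Longrightarrow> \<beta> \<bullet> z \<le> dual_norm N z"
  unfolding dual_norm_def by (rule cSup_upper) auto

lemma dual_least: "N 0 \<le> 1 \<Longrightarrow> (\<And>\<beta>. N \<beta> \<le> 1 \<Longrightarrow> \<beta> \<bullet> z \<le> u) \<Longrightarrow> dual_norm N z \<le> u"
  unfolding dual_norm_def by (rule cSup_least) auto

lemma dual_bdd: "(\<And>\<beta>. N \<beta> \<le> 1 \<Longrightarrow> \<beta> \<bullet> z \<le> M) \<Longrightarrow> bdd_above {\<beta> \<bullet> z | \<beta>. N \<beta> \<le> 1}"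
  unfolding bdd_above_def by auto

lemma isn_bdd: assumes N: "is_norm N" shows "bdd_above {\<beta> \<bullet> z | \<beta>. N \<beta> \<le> 1}"
proof -
  obtain c where c: "c > 0" "\<forall>x. c * norm x \<le> N x" using isn_lower[OF N] by blast
  show ?thesis
  proof (rule dual_bdd)
    fix \<beta> :: "real^'a" assume "N \<beta> \<le> 1"
    hence "c * norm \<beta> \<le> 1" using c by (meson order_trans)
    hence nb: "norm \<beta> \<le> 1 / c" using c by (simp add: field_simps)
    have "\<beta> \<bullet> z \<le> norm \<beta> * norm z" by (metis Cauchy_Schwarz_ineq2 abs_le_D1)
    also have "\<dots> \<le> (1/c) * norm z" using mult_right_mono[OF nb norm_ge_zero[of z]] by simp
    finally show "\<beta> \<bullet> z \<le> (1/c) * norm z" .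
  qed
qed

lemma isn_dual_nonneg: "is_norm N \<Longrightarrow> 0 \<le> dual_norm N z"
  using dual_upper[OF isn_bdd, of N 0 z] by (simp add: isn_0)

lemma isn_CS: assumes N: "is_norm N" shows "x \<bullet> z \<le> N x * dual_norm N z"
proof (cases "x = 0")
  case True thus ?thesis by (simp add: isn_0[OF N])
next
  case False
  hence p: "N x > 0" using isn_zero[OF N] isn_nonneg[OF N] by (metis less_eq_real_def)
  have "N ((1 / N x) *\<^sub>R x) \<le> 1" using p by (simp add: isn_scale[OF N])
  hence "((1 / N x) *\<^sub>R x) \<bullet> z \<le> dual_norm N z" by (rule dual_upper[OF isn_bdd[OF N]])
  hence "(x \<bullet> z) / N x \<le> dual_norm N z" by simp
  thus ?thesis using p by (simp add: field_simps)
qed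

lemma isn_dual_least: assumes N: "is_norm N" and h: "\<And>\<beta>. \<beta> \<bullet> z \<le> N \<beta> * u" and u: "0 \<le> u"
  shows "dual_norm N z \<le> u"
proof (rule dual_least)
  show "N 0 \<le> 1" by (simp add: isn_0[OF N])
  fix \<beta> assume b: "N \<beta> \<le> 1"
  have "N \<beta> * u \<le> 1 * u" by (rule mult_right_mono[OF b u])
  thus "\<beta> \<bullet> z \<le> u" using h[of \<beta>] by simp
qed

lemma isn_abs_CS: assumes N: "is_norm N" shows "\<bar>x \<bullet> z\<bar> \<le> N x * dual_norm N z"
  using isn_CS[OF N, of x z] isn_CS[OF N, of "-x" z] isn_scale[OF N, of "-1" x] by simp

lemma isn_dual: assumes N: "is_norm N" shows "is_norm (dual_norm N)"
proof (rule isnI)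
  fix x show "0 \<le> dual_norm N x" by (rule isn_dual_nonneg[OF N])
next
  fix x :: "real^'a"
  show "dual_norm N x = 0 \<longleftrightarrow> x = 0"
  proof
    assume "x = 0" thus "dual_norm N x = 0"
      using isn_dual_least[OF N, of 0 0] isn_dual_nonneg[OF N, of 0] by simp
  next
    assume d: "dual_norm N x = 0"
    have "x \<bullet> x \<le> N x * dual_norm N x" by (rule isn_CS[OF N])
    thus "x = 0" using d by (metis inner_gt_zero_iff mult_zero_right not_less)
  qed
next
  fix c :: real and x :: "real^'a"
  have le: "dual_norm N (c *\<^sub>R y) \<le> \<bar>c\<bar> * dual_norm N y" for c y
  proof (rule isn_dual_least[OF N])
    fix \<beta> :: "real^'a"
    have "\<beta> \<bullet> (c *\<^sub>R y) = c * (\<beta> \<bullet> y)" by simp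
    also have "\<dots> \<le> \<bar>c\<bar> * \<bar>\<beta> \<bullet> y\<bar>" by (metis abs_ge_self abs_mult)
    also have "\<dots> \<le> \<bar>c\<bar> * (N \<beta> * dual_norm N y)" by (rule mult_left_mono[OF isn_abs_CS[OF N]]) simp
    finally show "\<beta> \<bullet> (c *\<^sub>R y) \<le> N \<beta> * (\<bar>c\<bar> * dual_norm N y)" by (simp add: algebra_simps)
  qed (simp add: isn_dual_nonneg[OF N])
  show "dual_norm N (c *\<^sub>R x) = \<bar>c\<bar> * dual_norm N x"
  proof (cases "c = 0")
    case True thus ?thesis using le[of 0 x] isn_dual_nonneg[OF N, of 0] by simp
  next
    case False
    have "dual_norm N x = dual_norm N ((1/c) *\<^sub>R (c *\<^sub>R x))" using False by simp
    also have "\<dots> \<le> \<bar>1/c\<bar> * dual_norm N (c *\<^sub>R x)" by (rule le)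
    finally have "\<bar>c\<bar> * dual_norm N x \<le> dual_norm N (c *\<^sub>R x)" using False
      by (simp add: field_simps)
    thus ?thesis using le[of c x] by simp
  qed
next
  fix x y :: "real^'a"
  show "dual_norm N (x + y) \<le> dual_norm N x + dual_norm N y"
  proof (rule isn_dual_least[OF N])
    fix \<beta> :: "real^'a"
    have "\<beta> \<bullet> (x + y) = \<beta> \<bullet> x + \<beta> \<bullet> y" by (simp add: inner_add_right)
    also have "\<dots> \<le> N \<beta> * dual_norm N x + N \<beta> * dual_norm N y"
      using isn_CS[OF N, of \<beta> x] isn_CS[OF N, of \<beta> y] by simp
    finally show "\<beta> \<bullet> (x + y) \<le> N \<beta> * (dual_norm N x + dual_norm N y)" by (simp add: algebra_simps)
  qed (simp add: isn_dual_nonneg[OF N] add_nonneg_nonneg)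
qed



lemma non_0: "norm_on A Q \<Longrightarrow> Q 0 = 0"
  unfolding norm_on_def by (metis scalar_mult_eq_scaleR scale_zero_left abs_zero mult_zero_left)
lemma non_scale: "norm_on A Q \<Longrightarrow> Q (c *\<^sub>R x) = \<bar>c\<bar> * Q x"
  by (simp add: norm_on_def scalar_mult_eq_scaleR)

locale L =
  fixes \<Omega> :: "real^'n \<Rightarrow> real"
    and Omc :: "'n set \<Rightarrow> real^'n \<Rightarrow> real"
    and J :: "'n set"
  assumes norm_\<Omega>: "is_norm \<Omega>"
    and Omc_choice: "\<And>S. allowed \<Omega> S \<Longrightarrow> norm_on (- S) (Omc S) \<and>
        (\<forall>\<beta>. \<Omega> (restr S \<beta>) + Omc S (restr (- S) \<beta>) \<le> \<Omega> \<beta>)"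
begin

abbreviation "U S \<equiv> Upsilon \<Omega> Omc S"

lemma UNIV_allowed: "allowed \<Omega> UNIV"
  unfolding allowed_def
  by (rule exI[of _ "\<lambda>_. 0"]) (simp add: norm_on_def restr_UNIV restr_empty)

lemma fin: "finite {S. allowed \<Omega> S}" by simp

lemma non: "allowed \<Omega> S \<Longrightarrow> norm_on (- S) (Omc S)" using Omc_choice by blast

lemma U_le: "allowed \<Omega> S \<Longrightarrow> U S \<beta> \<le> \<Omega> \<beta>"
  using Omc_choice unfolding Upsilon_def by blast

lemma U_norm: assumes a: "allowed \<Omega> S" shows "is_norm (U S)"
proof -
  have O: "norm_on (- S) (Omc S)" by (rule non[OF a])
  note Od = O[unfolded norm_on_def]
  show ?thesis
  proof (rule isnI)
    fix x show "0 \<le> U S x" unfolding Upsilon_def using Od isn_nonneg[OF norm_\<Omega>] by (simp add: add_nonneg_nonneg)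
  next
    fix x
    show "U S x = 0 \<longleftrightarrow> x = 0"
    proof
      assume "U S x = 0"
      hence "\<Omega> (restr S x) = 0 \<and> Omc S (restr (- S) x) = 0"
        unfolding Upsilon_def using Od isn_nonneg[OF norm_\<Omega>]
        by (smt (verit))
      hence "restr S x = 0 \<and> restr (- S) (restr (- S) x) = 0"
        using Od isn_zero[OF norm_\<Omega>] by blast
      thus "x = 0" using restr_split[of S x] by (simp add: restr_idem)
    next
      assume "x = 0" thus "U S x = 0" by (simp add: Upsilon_def isn_0[OF norm_\<Omega>] non_0[OF O])
    qed
  next
    fix c x show "U S (c *\<^sub>R x) = \<bar>c\<bar> * U S x"
      by (simp add: Upsilon_def restr_scale isn_scale[OF norm_\<Omega>] non_scale[OF O] algebra_simps)
  next
    fix x y show "U S (x + y) \<le> U S x + U S y"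
      unfolding Upsilon_def restr_add using Od isn_add[OF norm_\<Omega>]
      by (smt (verit))
  qed
qed

lemma U_dual: assumes a: "allowed \<Omega> S"
  shows "dual_norm (U S) z = max (dual_norm \<Omega> (restr S z)) (dual_norm (Omc S) (restr (- S) z))"
proof -
  have O: "norm_on (- S) (Omc S)" by (rule non[OF a])
  note Od = O[unfolded norm_on_def]
  have UN: "is_norm (U S)" by (rule U_norm[OF a])
  obtain c where c: "c > 0" "\<forall>x. c * norm x \<le> U S x" using isn_lower[OF UN] by blast
  have Ur1: "U S (restr (- S) \<beta>) = Omc S \<beta>" for \<beta>
    unfolding Upsilon_def using Od by (simp add: restr_compl0 isn_0[OF norm_\<Omega>] restr_idem)
  have Ur2: "U S (restr S \<beta>) \<le> \<Omega> \<beta>" for \<beta>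
  proof -
    have "U S (restr S \<beta>) = \<Omega> (restr S \<beta>)"
      unfolding Upsilon_def by (simp add: restr_compl0 non_0[OF O] restr_idem)
    also have "\<dots> \<le> \<Omega> \<beta>" using Omc_choice[OF a] Od by (smt (verit))
    finally show ?thesis .
  qed
  have bddO: "bdd_above {\<beta> \<bullet> w | \<beta>. Omc S \<beta> \<le> 1}" if w: "w = restr (- S) z" for w
  proof (rule dual_bdd)
    fix \<beta> assume "Omc S \<beta> \<le> 1"
    hence "c * norm (restr (- S) \<beta>) \<le> 1" using c Ur1 by (metis order_trans)
    hence nb: "norm (restr (- S) \<beta>) \<le> 1 / c" using c by (simp add: field_simps)
    have "\<beta> \<bullet> w = restr (- S) \<beta> \<bullet> z" using w by (simp add: inner_restr)
    also have "\<dots> \<le> norm (restr (- S) \<beta>) * norm z" by (metis Cauchy_Schwarz_ineq2 abs_le_D1)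
    also have "\<dots> \<le> (1/c) * norm z" using mult_right_mono[OF nb norm_ge_zero[of z]] by simp
    finally show "\<beta> \<bullet> w \<le> (1/c) * norm z" .
  qed
  define A where "A = dual_norm \<Omega> (restr S z)"
  define B where "B = dual_norm (Omc S) (restr (- S) z)"
  have A0: "0 \<le> A" unfolding A_def by (rule isn_dual_nonneg[OF norm_\<Omega>])
  have B0: "0 \<le> B" unfolding B_def using dual_upper[OF bddO[OF refl], of 0] non_0[OF O] by simp
  have CSO: "x \<bullet> restr (- S) z \<le> Omc S x * B" for x
  proof (cases "Omc S x = 0")
    case True
    hence "restr (- S) x = 0" using Od by blast
    hence "x \<bullet> restr (- S) z = 0" by (metis inner_restr inner_zero_left)
    thus ?thesis using True by simp
  next
    case False
    hence p: "Omc S x > 0" using Od by (metis less_eq_real_def)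
    have "Omc S ((1 / Omc S x) *\<^sub>R x) \<le> 1" using p by (simp add: non_scale[OF O])
    hence "((1 / Omc S x) *\<^sub>R x) \<bullet> restr (- S) z \<le> B"
      unfolding B_def by (rule dual_upper[OF bddO[OF refl]])
    hence "(x \<bullet> restr (- S) z) / Omc S x \<le> B" by simp
    thus ?thesis using p by (simp add: field_simps)
  qed
  have le: "dual_norm (U S) z \<le> max A B"
  proof (rule isn_dual_least[OF UN])
    fix \<beta>
    have "\<beta> \<bullet> z = \<beta> \<bullet> restr S z + \<beta> \<bullet> restr (- S) z"
      by (metis inner_add_right restr_split)
    also have "\<beta> \<bullet> restr S z = restr S \<beta> \<bullet> restr S z" by (simp add: inner_restr restr_idem)
    also have "\<beta> \<bullet> restr (- S) z = restr (- S) \<beta> \<bullet> restr (- S) z" by (simp add: inner_restr restr_idem)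
    also have "restr S \<beta> \<bullet> restr S z + restr (- S) \<beta> \<bullet> restr (- S) z
        \<le> \<Omega> (restr S \<beta>) * A + Omc S (restr (- S) \<beta>) * B"
      using isn_CS[OF norm_\<Omega>, of "restr S \<beta>" "restr S z"] CSO[of "restr (- S) \<beta>"]
      unfolding A_def by simp
    also have "\<dots> \<le> \<Omega> (restr S \<beta>) * max A B + Omc S (restr (- S) \<beta>) * max A B"
      using Od isn_nonneg[OF norm_\<Omega>] by (simp add: add_mono mult_left_mono)
    also have "\<dots> = U S \<beta> * max A B" by (simp add: Upsilon_def algebra_simps)
    finally show "\<beta> \<bullet> z \<le> U S \<beta> * max A B" .
  qed (use A0 in auto)
  have geA: "A \<le> dual_norm (U S) z"
    unfolding A_def
  proof (rule dual_least)
    show "\<Omega> 0 \<le> 1" by (simp add: isn_0[OF norm_\<Omega>])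
    fix \<beta> assume "\<Omega> \<beta> \<le> 1"
    hence "U S (restr S \<beta>) \<le> 1" using Ur2 order_trans by blast
    hence "restr S \<beta> \<bullet> z \<le> dual_norm (U S) z" by (rule dual_upper[OF isn_bdd[OF UN]])
    thus "\<beta> \<bullet> restr S z \<le> dual_norm (U S) z" by (simp add: inner_restr)
  qed
  have geB: "B \<le> dual_norm (U S) z"
    unfolding B_def
  proof (rule dual_least)
    show "Omc S 0 \<le> 1" by (simp add: non_0[OF O])
    fix \<beta> assume "Omc S \<beta> \<le> 1"
    hence "U S (restr (- S) \<beta>) \<le> 1" using Ur1 by simp
    hence "restr (- S) \<beta> \<bullet> z \<le> dual_norm (U S) z" by (rule dual_upper[OF isn_bdd[OF UN]])
    thus "\<beta> \<bullet> restr (- S) z \<le> dual_norm (U S) z" by (simp add: inner_restr)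
  qed
  show ?thesis using le geA geB unfolding A_def B_def by simp
qed

end


context L begin

abbreviation "Mn \<equiv> Mnorm \<Omega> Omc J"
abbreviation "du S \<equiv> dual_norm (U S)"

lemma Mn_fin: "finite {max (du S y) (du S (flipv J y)) | S. allowed \<Omega> S}"
  by simp

lemma Mn_ge: assumes "allowed \<Omega> S" shows "du S y \<le> Mn y" "du S (flipv J y) \<le> Mn y"
proof -
  have "max (du S y) (du S (flipv J y)) \<le> Mn y"
    unfolding Mnorm_def by (rule Max_ge[OF Mn_fin]) (use assms in blast)
  thus "du S y \<le> Mn y" "du S (flipv J y) \<le> Mn y" by auto
qed

lemma Mn_le: assumes "\<And>S. allowed \<Omega> S \<Longrightarrow> du S y \<le> u \<and> du S (flipv J y) \<le> u"
  shows "Mn y \<le> u"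
  unfolding Mnorm_def
proof (rule Max.boundedI[OF Mn_fin])
  show "{max (du S y) (du S (flipv J y)) | S. allowed \<Omega> S} \<noteq> {}" using UNIV_allowed by blast
qed (use assms in auto)

lemma du_norm: "allowed \<Omega> S \<Longrightarrow> is_norm (du S)"
  by (rule isn_dual[OF U_norm])

lemma Mn_norm: "is_norm Mn"
proof (rule isnI)
  fix x show "0 \<le> Mn x" using Mn_ge(1)[OF UNIV_allowed, of x] isn_nonneg[OF du_norm[OF UNIV_allowed]]
    by (meson order_trans)
next
  fix x
  show "Mn x = 0 \<longleftrightarrow> x = 0"
  proof
    assume h: "Mn x = 0"
    hence "du UNIV x \<le> 0" using Mn_ge(1)[OF UNIV_allowed, of x] by simp
    hence "du UNIV x = 0" using isn_nonneg[OF du_norm[OF UNIV_allowed]] by (meson order_antisym)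
    thus "x = 0" using isn_zero[OF du_norm[OF UNIV_allowed]] by blast
  next
    assume x: "x = 0"
    have "Mn x \<le> 0" by (rule Mn_le) (simp add: x isn_0[OF du_norm])
    thus "Mn x = 0" using Mn_ge(1)[OF UNIV_allowed, of x] isn_nonneg[OF du_norm[OF UNIV_allowed]]
      by (meson order_antisym order_trans)
  qed
next
  fix c :: real and x :: "real^'n"
  have le: "Mn (c *\<^sub>R y) \<le> \<bar>c\<bar> * Mn y" for c y
  proof (rule Mn_le)
    fix S assume a: "allowed \<Omega> S"
    have N: "is_norm (du S)" by (rule du_norm[OF a])
    show "du S (c *\<^sub>R y) \<le> \<bar>c\<bar> * Mn y \<and> du S (flipv J (c *\<^sub>R y)) \<le> \<bar>c\<bar> * Mn y"
      using Mn_ge[OF a, of y] by (simp add: flip_scale isn_scale[OF N] mult_left_mono)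
  qed
  show "Mn (c *\<^sub>R x) = \<bar>c\<bar> * Mn x"
  proof (cases "c = 0")
    case True
    have "Mn 0 \<le> 0" by (rule Mn_le) (simp add: isn_0[OF du_norm])
    moreover have "0 \<le> Mn 0" using Mn_ge(1)[OF UNIV_allowed, of 0] isn_nonneg[OF du_norm[OF UNIV_allowed]]
      by (meson order_trans)
    ultimately show ?thesis using True by simp
  next
    case False
    have "Mn x = Mn ((1/c) *\<^sub>R (c *\<^sub>R x))" using False by simp
    also have "\<dots> \<le> \<bar>1/c\<bar> * Mn (c *\<^sub>R x)" by (rule le)
    finally have "\<bar>c\<bar> * Mn x \<le> Mn (c *\<^sub>R x)" using False by (simp add: field_simps)
    thus ?thesis using le[of c x] by simp
  qed
next
  fix x y :: "real^'n"
  show "Mn (x + y) \<le> Mn x + Mn y"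
  proof (rule Mn_le)
    fix S assume a: "allowed \<Omega> S"
    show "du S (x + y) \<le> Mn x + Mn y \<and> du S (flipv J (x + y)) \<le> Mn x + Mn y"
      using isn_add[OF du_norm[OF a], of x y] isn_add[OF du_norm[OF a], of "flipv J x" "flipv J y"]
        Mn_ge[OF a, of x] Mn_ge[OF a, of y]
      by (simp add: flip_add)
  qed
qed

lemma Mn_flip: "Mn (flipv J y) \<le> Mn y"
  by (rule Mn_le) (simp add: flip_flip Mn_ge)

lemma Mn_restr: "Mn (restr (- J) y) \<le> Mn y"
proof (rule Mn_le)
  fix S assume a: "allowed \<Omega> S"
  have N: "is_norm (du S)" by (rule du_norm[OF a])
  have "du S (restr (- J) y) = (1/2) * du S (y + - flipv J y)"
    by (simp add: restr_compl_flip isn_scale[OF N])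
  also have "\<dots> \<le> (1/2) * (du S y + du S (flipv J y))"
    using isn_add[OF N, of y "- flipv J y"] isn_scale[OF N, of "-1" "flipv J y"] by simp
  also have "\<dots> \<le> Mn y" using Mn_ge[OF a, of y] by simp
  finally have 1: "du S (restr (- J) y) \<le> Mn y" .
  moreover have "du S (flipv J (restr (- J) y)) = du S (restr (- J) y)"
    using isn_scale[OF N, of "-1" "restr (- J) y"] by (simp add: flip_restr_compl)
  ultimately show "du S (restr (- J) y) \<le> Mn y \<and> du S (flipv J (restr (- J) y)) \<le> Mn y" by simp
qed

abbreviation "K \<equiv> Bg \<Omega> Omc J"

lemma Bbar_compact: "compact (Bbar \<Omega> Omc)"
  unfolding Bbar_def by (rule compact_UN[OF fin]) (simp add: isn_compact_ball U_norm)

lemma K_compact: "compact K"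
proof -
  have "compact (flipset J (Bbar \<Omega> Omc))"
    unfolding flipset_def
    by (rule compact_continuous_image[OF linear_continuous_on Bbar_compact])
      (simp add: linear_flip linear_conv_bounded_linear[symmetric])
  thus ?thesis unfolding Bg_def
    by (intro compact_convex_hull compact_Un Bbar_compact)
qed

lemma K_convex: "convex K" unfolding Bg_def by simp

lemma K_0: "0 \<in> K"
proof -
  have "0 \<in> Bbar \<Omega> Omc" unfolding Bbar_def using UNIV_allowed
    by (auto simp: isn_0[OF U_norm[OF UNIV_allowed]])
  thus ?thesis unfolding Bg_def by (meson UnI1 hull_inc)
qed

lemma K_support: assumes "b \<in> K" shows "b \<bullet> y \<le> Mn y"
proof -
  have "K \<subseteq> {b. y \<bullet> b \<le> Mn y}" unfolding Bg_def
  proof (rule hull_minimal)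
    show "convex {b. y \<bullet> b \<le> Mn y}" by (rule convex_halfspace_le)
    show "Bbar \<Omega> Omc \<union> flipset J (Bbar \<Omega> Omc) \<subseteq> {b. y \<bullet> b \<le> Mn y}"
    proof
      fix b assume "b \<in> Bbar \<Omega> Omc \<union> flipset J (Bbar \<Omega> Omc)"
      then consider S \<beta> where "allowed \<Omega> S" "U S \<beta> \<le> 1" "b = \<beta>"
        | S \<beta> where "allowed \<Omega> S" "U S \<beta> \<le> 1" "b = flipv J \<beta>"
        unfolding Bbar_def flipset_def by blast
      thus "b \<in> {b. y \<bullet> b \<le> Mn y}"
      proof cases
        case 1
        have "\<beta> \<bullet> y \<le> U S \<beta> * du S y" by (rule isn_CS[OF U_norm[OF 1(1)]])
        also have "\<dots> \<le> 1 * du S y"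
          by (rule mult_right_mono[OF 1(2) isn_nonneg[OF du_norm[OF 1(1)]]])
        also have "\<dots> \<le> Mn y" using Mn_ge[OF 1(1)] by simp
        finally show ?thesis using 1 by (simp add: inner_commute)
      next
        case 2
        have "\<beta> \<bullet> flipv J y \<le> U S \<beta> * du S (flipv J y)" by (rule isn_CS[OF U_norm[OF 2(1)]])
        also have "\<dots> \<le> 1 * du S (flipv J y)"
          by (rule mult_right_mono[OF 2(2) isn_nonneg[OF du_norm[OF 2(1)]]])
        also have "\<dots> \<le> Mn y" using Mn_ge[OF 2(1)] by simp
        finally show ?thesis using 2 by (metis inner_commute inner_flip mem_Collect_eq)
      qed
    qed
  qed
  thus ?thesis using assms by (auto simp: inner_commute)
qed

lemma K_Mn: assumes h: "\<And>b. b \<in> K \<Longrightarrow> b \<bullet> y \<le> 1" shows "Mn y \<le> 1"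
proof (rule Mn_le)
  fix S assume a: "allowed \<Omega> S"
  have in0: "\<beta> \<in> Bbar \<Omega> Omc" if "U S \<beta> \<le> 1" for \<beta>
    unfolding Bbar_def using that a by blast
  have in1: "\<beta> \<in> K" if "U S \<beta> \<le> 1" for \<beta>
    unfolding Bg_def by (rule hull_inc) (use in0[OF that] in blast)
  have in2: "flipv J \<beta> \<in> K" if "U S \<beta> \<le> 1" for \<beta>
    unfolding Bg_def by (rule hull_inc) (use in0[OF that] in \<open>auto simp: flipset_def\<close>)
  show "du S y \<le> 1 \<and> du S (flipv J y) \<le> 1"
  proof
    show "du S y \<le> 1"
    proof (rule dual_least)
      show "U S 0 \<le> 1" by (simp add: isn_0[OF U_norm[OF a]])
      fix \<beta> assume "U S \<beta> \<le> 1" thus "\<beta> \<bullet> y \<le> 1" by (rule h[OF in1])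
    qed
    show "du S (flipv J y) \<le> 1"
    proof (rule dual_least)
      show "U S 0 \<le> 1" by (simp add: isn_0[OF U_norm[OF a]])
      fix \<beta> assume "U S \<beta> \<le> 1" thus "\<beta> \<bullet> flipv J y \<le> 1" using h[OF in2] inner_flip by metis
    qed
  qed
qed

end


context L begin

abbreviation "g \<equiv> gauge_g \<Omega> Omc J"

lemma inT: "t > 0 \<Longrightarrow> (1/t) *\<^sub>R x \<in> K \<Longrightarrow> t \<in> {t. t > 0 \<and> x \<in> (\<lambda>y. t *s y) ` K}"
  by (auto simp: scalar_mult_eq_scaleR image_iff intro!: bexI[of _ "(1/t) *\<^sub>R x"])

lemma Tdual: assumes "t \<in> {t. t > 0 \<and> x \<in> (\<lambda>y. t *s y) ` K}" shows "dual_norm Mn x \<le> t"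
proof -
  obtain b where t: "t > 0" and b: "b \<in> K" "x = t *\<^sub>R b" using assms by (auto simp: scalar_mult_eq_scaleR)
  show ?thesis
  proof (rule dual_least)
    show "Mn 0 \<le> 1" by (simp add: isn_0[OF Mn_norm])
    fix y assume y: "Mn y \<le> 1"
    have "b \<bullet> y \<le> 1" using K_support[OF b(1), of y] y by simp
    hence "t * (b \<bullet> y) \<le> t * 1" using t by (intro mult_left_mono) auto
    thus "y \<bullet> x \<le> t" using b by (simp add: inner_commute)
  qed
qed

lemma in_K: assumes td: "t > dual_norm Mn x" and t: "t > 0" shows "(1/t) *\<^sub>R x \<in> K"
proof (rule ccontr)
  assume nz: "(1/t) *\<^sub>R x \<notin> K"
  obtain a b where ab: "a \<bullet> ((1/t) *\<^sub>R x) < b" "\<forall>w\<in>K. a \<bullet> w > b"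
    using separating_hyperplane_closed_point[OF K_convex compact_imp_closed[OF K_compact] nz] by blast
  have b0: "b < 0" using ab(2) K_0 by force
  define y where "y = (1/b) *\<^sub>R a"
  have "Mn y \<le> 1"
  proof (rule K_Mn)
    fix w assume "w \<in> K"
    hence "a \<bullet> w > b" using ab by blast
    hence "(a \<bullet> w) / b < 1" using b0 by (simp add: divide_less_eq)
    thus "w \<bullet> y \<le> 1" by (simp add: y_def inner_commute)
  qed
  have "y \<bullet> x \<le> Mn y * dual_norm Mn x" by (rule isn_CS[OF Mn_norm])
  also have "\<dots> \<le> 1 * dual_norm Mn x"
    by (rule mult_right_mono[OF \<open>Mn y \<le> 1\<close> isn_dual_nonneg[OF Mn_norm]])
  finally have 1: "y \<bullet> x \<le> dual_norm Mn x" by simp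
  have "(a \<bullet> x) / t < b" using ab(1) by simp
  hence "a \<bullet> x < b * t" using t by (simp add: divide_less_eq mult.commute)
  hence "(a \<bullet> x) / b > t" using b0 by (simp add: less_divide_eq mult.commute)
  hence "y \<bullet> x > t" by (simp add: y_def)
  thus False using 1 td by simp
qed

lemma g_eq: "g x = dual_norm Mn x"
proof -
  define T where "T = {t. t > 0 \<and> x \<in> (\<lambda>y. t *s y) ` K}"
  define d where "d = dual_norm Mn x"
  have d0: "0 \<le> d" unfolding d_def by (rule isn_dual_nonneg[OF Mn_norm])
  have inT2: "d + e \<in> T" if "e > 0" for e
    unfolding T_def using d0 that by (intro inT in_K) (auto simp: d_def)
  have bdd: "bdd_below T" unfolding T_def by (rule bdd_belowI[of _ 0]) auto
  have "g x = Inf T" unfolding gauge_g_def T_def by simp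
  moreover have "d \<le> Inf T"
  proof (rule cInf_greatest)
    show "T \<noteq> {}" using inT2[of 1] by auto
    fix t assume "t \<in> T" thus "d \<le> t" unfolding T_def d_def by (rule Tdual)
  qed
  moreover have "Inf T \<le> d"
  proof (rule field_le_epsilon)
    fix e :: real assume "e > 0"
    thus "Inf T \<le> d + e" by (intro cInf_lower[OF _ bdd] inT2)
  qed
  ultimately show ?thesis unfolding d_def by simp
qed

lemma g_norm: "is_norm g"
  using isn_dual[OF Mn_norm] by (simp add: g_eq[abs_def])

lemma g_le_U: assumes a: "allowed \<Omega> S" shows "g \<beta> \<le> U S \<beta>" "g \<beta> \<le> U S (flipv J \<beta>)"
proof -
  have UN: "is_norm (U S)" by (rule U_norm[OF a])
  show "g \<beta> \<le> U S \<beta>" unfolding g_eq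
  proof (rule isn_dual_least[OF Mn_norm])
    fix y
    have "\<beta> \<bullet> y \<le> U S \<beta> * du S y" by (rule isn_CS[OF UN])
    also have "\<dots> \<le> U S \<beta> * Mn y" by (rule mult_left_mono[OF Mn_ge(1)[OF a] isn_nonneg[OF UN]])
    finally show "y \<bullet> \<beta> \<le> Mn y * U S \<beta>" by (simp add: inner_commute mult.commute)
  qed (rule isn_nonneg[OF UN])
  show "g \<beta> \<le> U S (flipv J \<beta>)" unfolding g_eq
  proof (rule isn_dual_least[OF Mn_norm])
    fix y
    have "flipv J \<beta> \<bullet> flipv J y \<le> U S (flipv J \<beta>) * du S (flipv J y)" by (rule isn_CS[OF UN])
    also have "\<dots> \<le> U S (flipv J \<beta>) * Mn y" by (rule mult_left_mono[OF Mn_ge(2)[OF a] isn_nonneg[OF UN]])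
    finally show "y \<bullet> \<beta> \<le> Mn y * U S (flipv J \<beta>)"
      by (simp add: inner_flip flip_flip inner_commute mult.commute)
  qed (rule isn_nonneg[OF UN])
qed

lemma g_restr: "g (restr (- J) \<beta>) \<le> g \<beta>"
  unfolding g_eq
proof (rule isn_dual_least[OF Mn_norm])
  fix y
  have "restr (- J) y \<bullet> \<beta> \<le> Mn (restr (- J) y) * dual_norm Mn \<beta>" by (rule isn_CS[OF Mn_norm])
  also have "\<dots> \<le> Mn y * dual_norm Mn \<beta>"
    by (rule mult_right_mono[OF Mn_restr isn_dual_nonneg[OF Mn_norm]])
  finally show "y \<bullet> restr (- J) \<beta> \<le> Mn y * dual_norm Mn \<beta>" by (metis inner_restr inner_commute)
qed (rule isn_dual_nonneg[OF Mn_norm])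

lemma main:
  "is_norm (gauge_g \<Omega> Omc J)
    \<and> (\<forall>S \<beta>. allowed \<Omega> S \<longrightarrow>
           gauge_g \<Omega> Omc J \<beta> \<le> Upsilon \<Omega> Omc S \<beta> \<and> Upsilon \<Omega> Omc S \<beta> \<le> \<Omega> \<beta>
           \<and> gauge_g \<Omega> Omc J \<beta> \<le> Upsilon \<Omega> Omc S (flipv J \<beta>))
    \<and> is_norm (Mnorm \<Omega> Omc J)
    \<and> (\<forall>x. gauge_g \<Omega> Omc J x = dual_norm (Mnorm \<Omega> Omc J) x)
    \<and> (\<forall>S z. allowed \<Omega> S \<longrightarrow>
           dual_norm (Upsilon \<Omega> Omc S) z
             = max (dual_norm \<Omega> (restr S z)) (dual_norm (Omc S) (restr (- S) z)))
    \<and> (\<forall>\<beta>. gauge_g \<Omega> Omc J (restr (- J) \<beta>) \<le> gauge_g \<Omega> Omc J \<beta>)"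
  using g_norm g_le_U U_le Mn_norm g_eq U_dual g_restr by blast

end


theorem lemma2:
  fixes \<Omega> :: "real^'n \<Rightarrow> real"
    and Omc :: "'n set \<Rightarrow> real^'n \<Rightarrow> real"
    and J :: "'n set"
  assumes norm_\<Omega>: "is_norm \<Omega>"
    and Omc_choice: "\<And>S. allowed \<Omega> S \<Longrightarrow> norm_on (- S) (Omc S) \<and>
        (\<forall>\<beta>. \<Omega> (restr S \<beta>) + Omc S (restr (- S) \<beta>) \<le> \<Omega> \<beta>)"
  shows "is_norm (gauge_g \<Omega> Omc J)
    \<and> (\<forall>S \<beta>. allowed \<Omega> S \<longrightarrow>
           gauge_g \<Omega> Omc J \<beta> \<le> Upsilon \<Omega> Omc S \<beta> \<and> Upsilon \<Omega> Omc S \<beta> \<le> \<Omega> \<beta>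
           \<and> gauge_g \<Omega> Omc J \<beta> \<le> Upsilon \<Omega> Omc S (flipv J \<beta>))
    \<and> is_norm (Mnorm \<Omega> Omc J)
    \<and> (\<forall>x. gauge_g \<Omega> Omc J x = dual_norm (Mnorm \<Omega> Omc J) x)
    \<and> (\<forall>S z. allowed \<Omega> S \<longrightarrow>
           dual_norm (Upsilon \<Omega> Omc S) z
             = max (dual_norm \<Omega> (restr S z)) (dual_norm (Omc S) (restr (- S) z)))
    \<and> (\<forall>\<beta>. gauge_g \<Omega> Omc J (restr (- J) \<beta>) \<le> gauge_g \<Omega> Omc J \<beta>)"
  proof -
  interpret L \<Omega> Omc J using norm_\<Omega> Omc_choice by unfold_locales blast+
  show ?thesis by (rule main)
qed


end
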